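(* Let $p\ge2$, $c\in\mathbb R^d$ and $\lambda_1,\dots,\lambda_d>0$. Then the function $H(y)=-\sum_{i=1}^dy_i^{1/p}|c_i|-\sqrt{\sum_{i=1}^d\lambda_i^{-1}y_i^{2/p}}$ is convex on $\mathbb R_+^d$. *)

theory Defs
  imports "HOL-Analysis.Analysis"
begin

end

theory Submission
  imports Defs
begin

lemma powr_concave_pos: "0 < r \<Longrightarrow> r \<le> 1 \<Longrightarrow> concave_on {0<..} (\<lambda>x::real. x powr r)"
  by (rule f''_le0_imp_concave[where f'="\<lambda>x. r * x powr (r - 1)"
        and f''="\<lambda>x. r * ((r - 1) * x powr (r - 1 - 1))"])
     (auto intro!: derivative_eq_intros, rule mult_nonneg_nonpos, simp, rule mult_nonpos_nonneg, auto)

lemma scal_ge: "0 < r \<Longrightarrow> r \<le> 1 \<Longrightarrow> 0 \<le> v \<Longrightarrow> v \<le> 1 \<Longrightarrow> (y::real) \<ge> 0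
   \<Longrightarrow> v * y powr r \<le> (v * y) powr r"
proof -
  assume a: "0 < r" "r \<le> 1" "0 \<le> v" "v \<le> 1" "y \<ge> 0"
  have "v powr 1 \<le> v powr r" using a by (intro powr_mono') auto
  hence "v \<le> v powr r" using a by simp
  hence "v * y powr r \<le> v powr r * y powr r" by (simp add: mult_right_mono)
  also have "\<dots> = (v * y) powr r" using a by (simp add: powr_mult)
  finally show ?thesis .
qed

lemma powr_concave_pt:
  fixes x y u v r :: real
  assumes "0 < r" "r \<le> 1" "x \<ge> 0" "y \<ge> 0" "0 \<le> u" "0 \<le> v" "u + v = 1"
  shows "u * x powr r + v * y powr r \<le> (u * x + v * y) powr r"
proof (cases "x = 0 \<or> y = 0")
  case True
  then show ?thesis
  proof
    assume "x = 0" thus ?thesis using assms scal_ge[of r v y] by simp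
  next
    assume "y = 0" thus ?thesis using assms scal_ge[of r u x] by simp
  qed
next
  case False
  hence "x > 0" "y > 0" using assms by auto
  then show ?thesis using concave_on_iff[THEN iffD1, OF powr_concave_pos[OF assms(1,2)]] assms
    by auto
qed

theorem proposition9:
  fixes p :: real and c :: "real ^ 'd" and lam :: "real ^ 'd"
  assumes "p \<ge> 2"
    and "\<And>i. lam $ i > 0"
  shows "convex_on {y :: real ^ 'd. \<forall>i. y $ i \<ge> 0}
           (\<lambda>y. - (\<Sum>i\<in>UNIV. (y $ i) powr (1 / p) * \<bar>c $ i\<bar>)
                - sqrt (\<Sum>i\<in>UNIV. (y $ i) powr (2 / p) / lam $ i))"
  unfolding convex_on_def
proof (intro conjI ballI allI impI)
  show "convex {y :: real ^ 'd. \<forall>i. y $ i \<ge> 0}"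
    by (auto simp: convex_def)
next
  fix x y :: "real ^ 'd" and u v :: real
  assume x: "x \<in> {y. \<forall>i. 0 \<le> y $ i}" and y: "y \<in> {y. \<forall>i. 0 \<le> y $ i}"
    and u: "0 \<le> u" and v: "0 \<le> v" and uv: "u + v = 1"
  let ?m = "u *\<^sub>R x + v *\<^sub>R y"
  have xi: "\<And>i. x $ i \<ge> 0" and yi: "\<And>i. y $ i \<ge> 0" using x y by auto
  have mi: "\<And>i. ?m $ i = u * x $ i + v * y $ i" by simp
  have p0: "0 < 1 / p" "1 / p \<le> 1" "0 < 2 / p" "2 / p \<le> 1" using assms(1) by auto
  define A where "A = (\<lambda>z :: real ^ 'd. \<Sum>i\<in>UNIV. (z $ i) powr (1 / p) * \<bar>c $ i\<bar>)"
  define B where "B = (\<lambda>z :: real ^ 'd. \<Sum>i\<in>UNIV. (z $ i) powr (2 / p) / lam $ i)"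
  have A: "u * A x + v * A y \<le> A ?m"
  proof -
    have "u * A x + v * A y = (\<Sum>i\<in>UNIV. (u * (x $ i) powr (1 / p) + v * (y $ i) powr (1 / p)) * \<bar>c $ i\<bar>)"
      unfolding A_def by (simp add: sum_distrib_left sum.distrib algebra_simps)
    also have "\<dots> \<le> A ?m" unfolding A_def mi
      by (intro sum_mono mult_right_mono powr_concave_pt p0 xi yi u v uv) auto
    finally show ?thesis .
  qed
  have B: "u * B x + v * B y \<le> B ?m"
  proof -
    have "u * B x + v * B y = (\<Sum>i\<in>UNIV. (u * (x $ i) powr (2 / p) + v * (y $ i) powr (2 / p)) / lam $ i)"
      unfolding B_def by (simp add: sum_distrib_left sum.distrib algebra_simps add_divide_distrib)
    also have "\<dots> \<le> B ?m" unfolding B_def mi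
      using assms(2)
      by (intro sum_mono divide_right_mono powr_concave_pt p0 xi yi u v uv) (auto intro: less_imp_le)
    finally show ?thesis .
  qed
  have Bnn: "\<And>z. (\<forall>i. z $ i \<ge> 0) \<Longrightarrow> B z \<ge> 0"
    unfolding B_def using assms(2) by (intro sum_nonneg divide_nonneg_pos) auto
  have Bx: "B x \<ge> 0" and By: "B y \<ge> 0" using Bnn xi yi by auto
  have "u * sqrt (B x) + v * sqrt (B y) = u * B x powr (1/2) + v * B y powr (1/2)"
    using Bx By by (simp add: powr_half_sqrt)
  also have "\<dots> \<le> (u * B x + v * B y) powr (1/2)"
    by (rule powr_concave_pt) (use Bx By u v uv in auto)
  also have "\<dots> = sqrt (u * B x + v * B y)"
    using Bx By u v by (simp add: powr_half_sqrt)
  also have "\<dots> \<le> sqrt (B ?m)" using B by simp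
  finally have S: "u * sqrt (B x) + v * sqrt (B y) \<le> sqrt (B ?m)" .
  have "- A ?m - sqrt (B ?m) \<le> u * (- A x - sqrt (B x)) + v * (- A y - sqrt (B y))"
    using A S by (simp add: algebra_simps)
  thus "- (\<Sum>i\<in>UNIV. ?m $ i powr (1 / p) * \<bar>c $ i\<bar>) - sqrt (\<Sum>i\<in>UNIV. ?m $ i powr (2 / p) / lam $ i)
        \<le> u * (- (\<Sum>i\<in>UNIV. x $ i powr (1 / p) * \<bar>c $ i\<bar>) - sqrt (\<Sum>i\<in>UNIV. x $ i powr (2 / p) / lam $ i)) +
           v * (- (\<Sum>i\<in>UNIV. y $ i powr (1 / p) * \<bar>c $ i\<bar>) - sqrt (\<Sum>i\<in>UNIV. y $ i powr (2 / p) / lam $ i))"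
    unfolding A_def B_def .
qed

end
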